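(* As $\mathbb F_3$-subspaces of the space of functions $\mathbb F_{3^{2m}}\to\mathbb F_3$, \[ \big\langle \mathrm{Tr}_{2m}(at^{3^m+1})\,\mathrm{Tr}_{2m}(bt) : a\in\mathbb F_{3^m}^*,\ b\in\mathbb F_{3^{2m}}\big\rangle_{\mathbb F_3}=\Big\{\sum_{i=0}^{m-1}\mathrm{Tr}_{2m}\big(c_it^{(3^m+1)3^i+1}\big): c_0,\dots,c_{m-1}\in\mathbb F_{3^{2m}}\Big\}. \]
   Context: $m\ge2$ is an integer; $\mathrm{Tr}_{2m}:\mathbb F_{3^{2m}}\to\mathbb F_3$ is the absolute trace $x\mapsto\sum_{i=0}^{2m-1}x^{3^i}$; $\mathbb F_{3^m}\subseteq\mathbb F_{3^{2m}}$; each expression is regarded as a function of $t\in\mathbb F_{3^{2m}}$, with pointwise products; $\langle\cdot\rangle_{\mathbb F_3}$ denotes $\mathbb F_3$-linear span. *)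

theory Defs
  imports Main
begin

text \<open>The ambient field F_{3^{2m}} is modelled as a finite field type 'a with
  CARD('a) = 3^(2m). The prime field F_3 is the image of the integers.\<close>

definition F3 :: "'a::field set" where
  "F3 = range of_int"

text \<open>The subfield F_{3^m}: fixed points of the Frobenius power x \<mapsto> x^(3^m).\<close>
definition Fsub :: "nat \<Rightarrow> 'a::field set" where
  "Fsub m = {x. x ^ (3 ^ m) = x}"

definition Tr :: "nat \<Rightarrow> 'a::field \<Rightarrow> 'a" where
  "Tr m x = (\<Sum>i<2*m. x ^ (3 ^ i))"

definition F3span :: "('b \<Rightarrow> 'a::field) set \<Rightarrow> ('b \<Rightarrow> 'a) set" where
  "F3span G = {f. \<exists>n (c::nat \<Rightarrow> 'a) (g::nat \<Rightarrow> 'b \<Rightarrow> 'a).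
      (\<forall>i<n. c i \<in> F3 \<and> g i \<in> G) \<and> f = (\<lambda>t. \<Sum>i<n. c i * g i t)}"

end

theory Submission imports Defs "HOL-Number_Theory.Residues" "HOL-Computational_Algebra.Polynomial" begin

lemma fermat_ff:
  fixes x :: "'a::{field,finite}"
  shows "x ^ card (UNIV :: 'a set) = x"
proof (cases "x = 0")
  case False
  have "x * (\<Prod>y\<in>UNIV-{0}. x * y) = x * x ^ (card (UNIV :: 'a set) - 1) * \<Prod>(UNIV-{0})"
    by (simp add: prod.distrib mult_ac)
  also have "x * x ^ (card (UNIV :: 'a set) - 1) = x ^ Suc (card (UNIV :: 'a set) - 1)"
    by (subst power_Suc) auto
  also have "Suc (card (UNIV :: 'a set) - 1) = card (UNIV :: 'a set)"
    using finite_UNIV_card_ge_0[where ?'a = 'a] by simp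
  also have "(\<Prod>y\<in>UNIV-{0}. x * y) = (\<Prod>y\<in>UNIV-{0}. y)"
    by (rule prod.reindex_bij_witness[of _ "\<lambda>y. y / x" "\<lambda>y. x * y"]) (use False in auto)
  finally show ?thesis
    by simp
qed (use finite_UNIV_card_ge_0[where ?'a = 'a] in auto)

lemma sum_lessThan_add_split:
  "(\<Sum>i<n+k. f i) = (\<Sum>i<n. f i) + (\<Sum>i<k. f (n+i))" for f :: "nat \<Rightarrow> 'b::comm_monoid_add"
  by (induction k) (simp_all add: add_ac)

lemma int_cube_mod3: "(3::int) dvd (k^3 - k)"
proof -
  define q where "q = k div 3"
  define r where "r = k mod 3"
  have k: "k = 3*q + r" unfolding q_def r_def by simp
  have "r = 0 \<or> r = 1 \<or> r = 2" unfolding r_def by presburger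
  moreover have "3 dvd k^3 - k" if "r = 0"
    by (rule dvdI[of _ _ "9*q^3 - q"]) (simp add: k that power3_eq_cube algebra_simps)
  moreover have "3 dvd k^3 - k" if "r = 1"
    by (rule dvdI[of _ _ "9*q^3 + 9*q^2 + 2*q"]) (simp add: k that power3_eq_cube power2_eq_square algebra_simps)
  moreover have "3 dvd k^3 - k" if "r = 2"
    by (rule dvdI[of _ _ "9*q^3 + 18*q^2 + 11*q + 2"]) (simp add: k that power3_eq_cube power2_eq_square algebra_simps)
  ultimately show ?thesis by blast
qed

context
  fixes m :: nat
  assumes m1: "m \<ge> 1" and cardA: "card (UNIV :: 'a::{field,finite} set) = 3^(2*m)"
begin

lemma CHAR3: "CHAR('a) = 3"
proof -
  have "CHAR('a) dvd 3^(2*m)" using CHAR_dvd_CARD[where 'a='a] cardA by simp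
  moreover have p: "prime CHAR('a)"
    using prime_CHAR_semidom finite_imp_CHAR_pos[where 'a='a] by simp
  ultimately have "CHAR('a) dvd 3" using prime_dvd_power by blast
  then show ?thesis using p primes_dvd_imp_eq[of "CHAR('a)" 3] by simp
qed

lemma three0: "(3::'a) = 0"
  using of_nat_CHAR[where 'a='a] CHAR3 by simp

lemma frob: "((x::'a) + y)^(3^k) = x^(3^k) + y^(3^k)"
  by (rule freshmans_dream') (simp_all add: CHAR3)

lemma frob_sum: "(sum f A :: 'a)^(3^k) = sum (\<lambda>i. f i^(3^k)) A"
  by (rule freshmans_dream_sum') (simp_all add: CHAR3)

lemma frob_minus: "(-x::'a)^(3^k) = -(x^(3^k))"
  by (simp add: power_minus_odd)

lemma pow_full: "(x::'a)^(3^(2*m)) = x"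
  using fermat_ff[of x] cardA by simp

lemma Tr_add: "Tr m ((x::'a) + y) = Tr m x + Tr m y"
  by (simp add: Tr_def frob sum.distrib)

lemma Tr_sum: "Tr m (sum f A :: 'a) = (\<Sum>x\<in>A. Tr m (f x))"
  unfolding Tr_def by (simp add: frob_sum sum.swap[of _ A])

lemma Tr_minus: "Tr m (-x::'a) = - Tr m x"
  by (simp add: Tr_def frob_minus sum_negf)

lemma Tr_zero: "Tr m (0::'a) = 0"
  by (simp add: Tr_def zero_power)

lemma Tr_cube: "Tr m (x::'a) ^ 3 = Tr m x"
proof -
  have "Tr m x ^ 3 = Tr m x ^ (3^1)" by simp
  also have "\<dots> = (\<Sum>i<2*m. x^(3^Suc i))"
    unfolding Tr_def frob_sum by (simp add: power_mult[symmetric] mult.commute)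
  also have "\<dots> = Tr m x"
  proof -
    have "(\<Sum>i<Suc (2*m). x^(3^i)) = x^(3^0) + (\<Sum>i<2*m. x^(3^Suc i))"
      by (rule sum.lessThan_Suc_shift)
    moreover have "(\<Sum>i<Suc (2*m). x^(3^i)) = (\<Sum>i<2*m. x^(3^i)) + x^(3^(2*m))"
      by simp
    ultimately show ?thesis unfolding Tr_def using pow_full[of x] by (simp add: add.commute)
  qed
  finally show ?thesis .
qed

lemma cube_pow: "(k::'a)^3 = k \<Longrightarrow> k^(3^i) = k"
proof (induction i)
  case (Suc i)
  have "k^(3^Suc i) = (k^(3^i))^3" by (simp add: power_mult[symmetric] mult.commute)
  then show ?case using Suc by simp
qed simp

lemma Tr_scal: "(k::'a)^3 = k \<Longrightarrow> Tr m (k * x) = k * Tr m x"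
  unfolding Tr_def by (simp add: power_mult_distrib cube_pow sum_distrib_left)

lemma Tr_prod: "Tr m (x::'a) * Tr m y = (\<Sum>i<2*m. Tr m (x^(3^i) * y))"
proof -
  have "Tr m x * Tr m y = Tr m (Tr m x * y)" by (simp add: Tr_scal Tr_cube)
  also have "\<dots> = (\<Sum>i<2*m. Tr m (x^(3^i) * y))"
    by (subst (2) Tr_def) (simp add: sum_distrib_right Tr_sum)
  finally show ?thesis .
qed

lemma F3_cube: "k \<in> F3 \<Longrightarrow> (k::'a)^3 = k"
proof -
  assume "k \<in> F3"
  then obtain z where z: "k = of_int z" by (auto simp: F3_def)
  have "int CHAR('a) dvd z^3 - z" using CHAR3 int_cube_mod3[of z] by simp
  then have "of_int (z^3 - z) = (0::'a)"
    by (simp only: of_int_eq_0_iff_char_dvd)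
  then show ?thesis using z by (simp add: of_int_diff of_int_power)
qed

lemma fix_sum:
  assumes "(x::'a)^(3^m) = x"
  shows "(\<Sum>i<2*m. h (x^(3^i))) = -(\<Sum>i<m. (h (x^(3^i)) :: 'a))"
proof -
  have e: "x^(3^(m+i)) = x^(3^i)" for i
  proof -
    have "x^(3^(m+i)) = (x^(3^m))^(3^i)" by (simp only: power_add power_mult)
    then show ?thesis using assms by simp
  qed
  define X where "X = (\<Sum>i<m. (h (x^(3^i)) :: 'a))"
  have "(\<Sum>i<2*m. h (x^(3^i))) = (\<Sum>i<m+m. h (x^(3^i)))" by (simp add: mult_2)
  also have "\<dots> = X + (\<Sum>i<m. h (x^(3^(m+i))))"
    unfolding X_def by (rule sum_lessThan_add_split)
  also have "(\<Sum>i<m. h (x^(3^(m+i)))) = X" unfolding X_def e ..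
  finally have 1: "(\<Sum>i<2*m. h (x^(3^i))) = X + X" .
  have "X + X + X = 3 * X" by (simp add: algebra_simps)
  also have "\<dots> = 0" by (simp add: three0)
  finally have "X + X + X = 0" .
  then have "X + X = - X" by (simp add: eq_neg_iff_add_eq_0)
  then show ?thesis unfolding 1 X_def .
qed


lemma pow_qq: "(t::'a)^(3^m*3^m) = t"
proof -
  have "(3::nat)^m*3^m = 3^(2*m)" by (simp add: mult_2 power_add)
  then show ?thesis using pow_full by simp
qed

lemma Fsub_mult: "a \<in> Fsub m \<Longrightarrow> b \<in> Fsub m \<Longrightarrow> (a::'a) * b \<in> Fsub m"
  by (simp add: Fsub_def power_mult_distrib)

lemma Fsub_div: "a \<in> Fsub m \<Longrightarrow> b \<in> Fsub m \<Longrightarrow> (a::'a) / b \<in> Fsub m"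
  by (simp add: Fsub_def power_divide)

lemma three_pow_lt: "k < m \<Longrightarrow> (3::nat)^k + 1 < 3^m"
proof -
  assume "k < m"
  then have "(3::nat)^(Suc k) \<le> 3^m" by (intro power_increasing) auto
  then have "3 * (3::nat)^k \<le> 3^m" by simp
  moreover have "(1::nat) \<le> 3^k" by simp
  ultimately show ?thesis by linarith
qed

lemma card_Fsub_le: "card (Fsub m :: 'a set) \<le> 3^m"
proof -
  define p where "p = Polynomial.monom (1::'a) (3^m) - Polynomial.monom 1 1"
  have "(1::nat) < 3^m" using m1 by (intro one_less_power) auto
  then have "coeff p (3^m) = 1" by (simp add: p_def coeff_monom)
  then have "p \<noteq> 0" by auto
  have "Fsub m \<subseteq> {x. poly p x = 0}" by (auto simp: Fsub_def p_def poly_monom)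
  then have "card (Fsub m :: 'a set) \<le> card {x. poly p x = 0}" by (intro card_mono) auto
  also have "\<dots> \<le> degree p" using \<open>p \<noteq> 0\<close> by (rule card_poly_roots_bound)
  also have "degree p \<le> 3^m"
    using degree_diff_le_max[of "Polynomial.monom (1::'a) (3^m)" "Polynomial.monom 1 1"]
      degree_monom_le[of "1::'a" "3^m"] degree_monom_le[of "1::'a" 1] \<open>(1::nat) < 3^m\<close>
    unfolding p_def by linarith
  finally show ?thesis .
qed

lemma zero_Fsub: "(0::'a) \<in> Fsub m"
  by (simp add: Fsub_def)

lemma card_S: "card (Fsub m - {0} :: 'a set) = 3^m - 1"
proof -
  define S where "S = (Fsub m - {0} :: 'a set)"
  have up: "card S \<le> 3^m - 1"
    using card_Fsub_le zero_Fsub unfolding S_def by (simp add: card_Diff_singleton)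
  define F where "F s = {t::'a. poly ([:-s:] + Polynomial.monom 1 (3^m+1)) t = 0}" for s
  have Fcard: "card (F s) \<le> 3^m+1" for s
  proof -
    define p where "p = [:-s:] + Polynomial.monom (1::'a) (3^m+1)"
    have "coeff p (3^m+1) = 1" by (simp add: p_def coeff_monom)
    then have "p \<noteq> 0" by auto
    have "card (F s) \<le> degree p" unfolding F_def p_def[symmetric]
      using \<open>p \<noteq> 0\<close> by (rule card_poly_roots_bound)
    also have "degree p \<le> 3^m+1" unfolding p_def
      by (intro degree_add_le) (auto simp: degree_monom_le)
    finally show ?thesis .
  qed
  have cover: "UNIV - {0} \<subseteq> (\<Union>s\<in>S. F s)"
  proof
    fix t :: 'a assume "t \<in> UNIV - {0}"
    then have t0: "t \<noteq> 0" by simp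
    define s where "s = t^(3^m+1)"
    have "s^(3^m) = t^((3^m+1)*3^m)" unfolding s_def by (simp only: power_mult)
    also have "\<dots> = t^(3^m*3^m) * t^(3^m)" by (simp only: distrib_right power_add mult_1)
    also have "\<dots> = s" unfolding s_def pow_qq by (simp add: mult.commute)
    finally have "s \<in> S" using t0 unfolding S_def Fsub_def s_def by simp
    moreover have "t \<in> F s" unfolding F_def s_def by (simp add: poly_monom)
    ultimately show "t \<in> (\<Union>s\<in>S. F s)" by blast
  qed
  have "card (UNIV - {0::'a}) \<le> card (\<Union>s\<in>S. F s)" using cover by (intro card_mono) auto
  also have "\<dots> \<le> (\<Sum>s\<in>S. card (F s))" by (rule card_UN_le) simp
  also have "\<dots> \<le> card S * (3^m+1)" using sum_bounded_above[of S "\<lambda>s. card (F s)" "3^m+1"] Fcard by simp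
  finally have 1: "card (UNIV - {0::'a}) \<le> card S * (3^m+1)" .
  have "card (UNIV - {0::'a}) = 3^m*3^m - 1"
    using cardA by (simp add: card_Diff_singleton mult_2 power_add)
  also have "(3::nat)^m*3^m - 1 = (3^m - 1) * (3^m + 1)"
  proof -
    have "(1::nat) \<le> 3^m" by simp
    then obtain r where "(3::nat)^m = r + 1" by (metis le_add_diff_inverse2)
    then show ?thesis by (simp add: algebra_simps)
  qed
  finally have "(3^m - 1) * (3^m + 1) \<le> card S * (3^m+1)" using 1 by simp
  then have "3^m - 1 \<le> card S" by (rule mult_right_le_imp_le) simp
  with up show ?thesis unfolding S_def by simp
qed

lemma psum:
  assumes "i < m" "j < m"
  shows "(\<Sum>a\<in>Fsub m - {0}. (a::'a)^(3^i) / a^(3^j)) = (if i = j then -1 else 0)"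
proof (cases "i = j")
  case True
  have "(\<Sum>a\<in>Fsub m - {0}. (a::'a)^(3^i) / a^(3^j)) = (\<Sum>a\<in>(Fsub m - {0} :: 'a set). 1)"
    using True by (auto intro!: sum.cong)
  also have "\<dots> = of_nat (3^m - 1)" using card_S by simp
  also have "\<dots> = of_nat (3^m) - 1" by (simp add: of_nat_diff)
  also have "(of_nat (3^m) :: 'a) = 3^m" by simp
  also have "(3::'a)^m = 0" using three0 m1 by (simp add: zero_power)
  finally show ?thesis using True by simp
next
  case False
  define S where "S = (Fsub m - {0} :: 'a set)"
  define h where "h a = (a::'a)^(3^i) / a^(3^j)" for a
  have "\<exists>g\<in>S. g^(3^i) \<noteq> g^(3^j)"
  proof (rule ccontr)
    assume "\<not> ?thesis"
    then have allr: "\<forall>g\<in>S. g^(3^i) = g^(3^j)" by blast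
    define p where "p = Polynomial.monom (1::'a) (3^i) - Polynomial.monom 1 (3^j)"
    have ne: "(3::nat)^i \<noteq> 3^j" using False by simp
    then have "coeff p (3^i) = 1" by (simp add: p_def coeff_monom)
    then have "p \<noteq> 0" by auto
    have "S \<subseteq> {x. poly p x = 0}" using allr by (auto simp: p_def poly_monom)
    then have "card S \<le> card {x. poly p x = 0}" by (intro card_mono) auto
    also have "\<dots> \<le> degree p" using \<open>p \<noteq> 0\<close> by (rule card_poly_roots_bound)
    also have "degree p \<le> max (3^i) (3^j)"
      using degree_diff_le_max[of "Polynomial.monom (1::'a) (3^i)" "Polynomial.monom 1 (3^j)"]
        degree_monom_le[of "1::'a" "3^i"] degree_monom_le[of "1::'a" "3^j"]
      unfolding p_def by linarith
    finally have "card S \<le> max (3^i) (3^j)" .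
    moreover have "card S = 3^m - 1" unfolding S_def by (rule card_S)
    moreover have "(3::nat)^i + 1 < 3^m" "(3::nat)^j + 1 < 3^m"
      using assms three_pow_lt by auto
    ultimately show False by linarith
  qed
  then obtain g where gS: "g \<in> S" and gne: "g^(3^i) \<noteq> g^(3^j)" by blast
  have g0: "g \<noteq> 0" and gF: "g \<in> Fsub m" using gS by (auto simp: S_def)
  have hg: "h g \<noteq> 1" using gne g0 by (simp add: h_def)
  have hmul: "h (g * a) = h g * h a" if "a \<noteq> 0" for a
    using that g0 by (simp add: h_def power_mult_distrib)
  have "(\<Sum>a\<in>S. h (g * a)) = (\<Sum>a\<in>S. h a)"
    by (rule sum.reindex_bij_witness[of _ "\<lambda>a. a / g" "\<lambda>a. g * a"])
       (use g0 gF in \<open>auto simp: S_def intro: Fsub_mult Fsub_div\<close>)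
  moreover have "(\<Sum>a\<in>S. h (g * a)) = h g * (\<Sum>a\<in>S. h a)"
    by (simp add: sum_distrib_left S_def hmul)
  ultimately have "(1 - h g) * (\<Sum>a\<in>S. h a) = 0" by (simp add: algebra_simps)
  then have "(\<Sum>a\<in>S. h a) = 0" using hg by simp
  then show ?thesis using False unfolding S_def h_def by simp
qed

lemma gen_formula:
  assumes "a \<in> Fsub m"
  shows "Tr m ((a::'a) * t^(3^m+1)) * Tr m (b*t)
       = -(\<Sum>i<m. Tr m ((b * a^(3^i)) * t^((3^m+1)*3^i+1)))"
proof -
  define x where "x = a * t^(3^m+1)"
  have a: "a^(3^m) = a" using assms by (simp add: Fsub_def)
  have "(t^(3^m+1))^(3^m) = t^((3^m+1)*3^m)" by (simp only: power_mult)
  also have "\<dots> = t^(3^m*3^m) * t^(3^m)" by (simp only: distrib_right power_add mult_1)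
  also have "\<dots> = t^(3^m+1)" unfolding pow_qq by (simp add: mult.commute)
  finally have tt: "(t^(3^m+1))^(3^m) = t^(3^m+1)" .
  have xf: "x^(3^m) = x" unfolding x_def power_mult_distrib a tt ..
  have "Tr m x * Tr m (b*t) = (\<Sum>i<2*m. Tr m (x^(3^i) * (b*t)))" by (rule Tr_prod)
  also have "\<dots> = -(\<Sum>i<m. Tr m (x^(3^i) * (b*t)))"
    by (rule fix_sum[OF xf, where h="\<lambda>y. Tr m (y * (b*t))"])
  also have "(\<Sum>i<m. Tr m (x^(3^i) * (b*t))) = (\<Sum>i<m. Tr m ((b * a^(3^i)) * t^((3^m+1)*3^i+1)))"
  proof (intro sum.cong refl)
    fix i
    have "x^(3^i) * (b*t) = (b * a^(3^i)) * ((t^(3^m+1))^(3^i) * t)"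
      unfolding x_def by (simp add: power_mult_distrib mult_ac)
    also have "(t^(3^m+1))^(3^i) * t = t^((3^m+1)*3^i+1)"
      by (simp only: power_mult power_add power_one_right)
    finally have eq: "x^(3^i) * (b*t) = (b * a^(3^i)) * t^((3^m+1)*3^i+1)" .
    show "Tr m (x^(3^i) * (b*t)) = Tr m ((b * a^(3^i)) * t^((3^m+1)*3^i+1))" using eq by (rule arg_cong)
  qed
  finally show ?thesis unfolding x_def .
qed

end


lemma span_gen: "g \<in> G \<Longrightarrow> g \<in> F3span (G :: ('b \<Rightarrow> 'a::field) set)"
  unfolding F3span_def
  apply (rule CollectI)
  apply (rule exI[of _ 1], rule exI[of _ "\<lambda>_. 1"], rule exI[of _ "\<lambda>_. g"])
  apply (auto simp: F3_def intro!: image_eqI[of _ _ 1])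
  done

lemma span_zero: "(\<lambda>t. 0) \<in> F3span (G :: ('b \<Rightarrow> 'a::field) set)"
  unfolding F3span_def by (rule CollectI, rule exI[of _ 0]) auto

lemma span_add:
  assumes "f1 \<in> F3span G" "f2 \<in> F3span (G :: ('b \<Rightarrow> 'a::field) set)"
  shows "(\<lambda>t. f1 t + f2 t) \<in> F3span G"
proof -
  obtain n1 :: nat and c1 g1 where 1: "\<forall>i<n1. c1 i \<in> F3 \<and> g1 i \<in> G" "f1 = (\<lambda>t. \<Sum>i<n1. c1 i * g1 i t)"
    using assms(1) unfolding F3span_def mem_Collect_eq by blast
  obtain n2 :: nat and c2 g2 where 2: "\<forall>i<n2. c2 i \<in> F3 \<and> g2 i \<in> G" "f2 = (\<lambda>t. \<Sum>i<n2. c2 i * g2 i t)"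
    using assms(2) unfolding F3span_def mem_Collect_eq by blast
  define c where "c i = (if i < n1 then c1 i else c2 (i - n1))" for i
  define g where "g i = (if i < n1 then g1 i else g2 (i - n1))" for i
  have "\<forall>i<n1+n2. c i \<in> F3 \<and> g i \<in> G" using 1 2 by (auto simp: c_def g_def)
  moreover have "(\<lambda>t. f1 t + f2 t) = (\<lambda>t. \<Sum>i<n1+n2. c i * g i t)"
  proof
    fix t
    have "(\<Sum>i<n1+n2. c i * g i t) = (\<Sum>i<n1. c i * g i t) + (\<Sum>i<n2. c (n1+i) * g (n1+i) t)"
      by (rule sum_lessThan_add_split)
    also have "(\<Sum>i<n1. c i * g i t) = f1 t" using 1 by (simp add: c_def g_def)
    also have "(\<Sum>i<n2. c (n1+i) * g (n1+i) t) = f2 t" using 2 by (simp add: c_def g_def)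
    finally show "f1 t + f2 t = (\<Sum>i<n1+n2. c i * g i t)" by simp
  qed
  ultimately show ?thesis unfolding F3span_def by blast
qed

lemma span_sum:
  assumes "finite A" "\<forall>x\<in>A. h x \<in> F3span (G :: ('b \<Rightarrow> 'a::field) set)"
  shows "(\<lambda>t. \<Sum>x\<in>A. h x t) \<in> F3span G"
  using assms
proof (induction A rule: finite_induct)
  case empty
  then show ?case using span_zero by simp
next
  case (insert x F)
  then have "(\<lambda>t. h x t + (\<Sum>x\<in>F. h x t)) \<in> F3span G"
    using span_add[of "h x" G "\<lambda>t. \<Sum>x\<in>F. h x t"] by auto
  then show ?case using insert by simp
qed

theorem lemma3p13:
  fixes m :: nat
  assumes "m \<ge> 2"
    and "card (UNIV :: 'a::{field,finite} set) = 3 ^ (2 * m)"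
  shows "F3span {(\<lambda>t::'a. Tr m (a * t ^ (3 ^ m + 1)) * Tr m (b * t)) | a b.
                   a \<in> Fsub m \<and> a \<noteq> 0}
         = {(\<lambda>t::'a. \<Sum>i<m. Tr m (c i * t ^ ((3 ^ m + 1) * 3 ^ i + 1))) | c. True}"
  (is "F3span ?G = ?R")
proof -
  have m1: "m \<ge> 1" using assms(1) by simp
  note cA = assms(2)
  note gen = gen_formula[OF m1 cA]
  note TrS = Tr_sum[OF m1 cA]
  note TrM = Tr_minus[OF m1 cA]
  note TrZ = Tr_zero[OF m1 cA]
  note TrSc = Tr_scal[OF m1 cA]
  note F3c = F3_cube[OF m1 cA]
  note ps = psum[OF m1 cA]
  define e where "e i = ((3 ^ m + 1) * 3 ^ i + 1 :: nat)" for i :: nat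
  show ?thesis
  proof
    show "F3span ?G \<subseteq> ?R"
    proof
      fix f assume "f \<in> F3span ?G"
      then obtain n :: nat and k g where ng: "\<forall>i<n. k i \<in> F3 \<and> g i \<in> ?G" and f: "f = (\<lambda>t. \<Sum>i<n. k i * g i t)"
        unfolding F3span_def mem_Collect_eq by blast
      have "\<forall>j. \<exists>ab. j < n \<longrightarrow> (g j = (\<lambda>t::'a. Tr m (fst ab * t ^ (3 ^ m + 1)) * Tr m (snd ab * t))
              \<and> fst ab \<in> Fsub m \<and> fst ab \<noteq> 0)"
        using ng by fastforce
      then obtain AB where AB: "\<forall>j. j < n \<longrightarrow> (g j = (\<lambda>t::'a. Tr m (fst (AB j) * t ^ (3 ^ m + 1)) * Tr m (snd (AB j) * t))
              \<and> fst (AB j) \<in> Fsub m \<and> fst (AB j) \<noteq> 0)"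
        by (metis choice)
      define A where "A j = fst (AB j)" for j
      define B where "B j = snd (AB j)" for j
      define c where "c i = (\<Sum>j<n. -(k j * B j * A j ^ (3 ^ i)))" for i
      have "f = (\<lambda>t. \<Sum>i<m. Tr m (c i * t ^ e i))"
      proof
        fix t
        have "f t = (\<Sum>j<n. k j * -(\<Sum>i<m. Tr m ((B j * A j ^ (3 ^ i)) * t ^ e i)))"
          unfolding f e_def using AB gen by (auto simp: A_def B_def intro!: sum.cong)
        also have "\<dots> = (\<Sum>j<n. \<Sum>i<m. Tr m (-(k j * B j * A j ^ (3 ^ i)) * t ^ e i))"
        proof (intro sum.cong refl)
          fix j assume "j \<in> {..<n}"
          then have kc: "k j ^ 3 = k j" using ng F3c by auto
          have "k j * -(\<Sum>i<m. Tr m ((B j * A j ^ (3 ^ i)) * t ^ e i))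
              = (\<Sum>i<m. - (k j * Tr m ((B j * A j ^ (3 ^ i)) * t ^ e i)))"
            by (simp add: sum_distrib_left sum_negf)
          also have "\<dots> = (\<Sum>i<m. Tr m (-(k j * B j * A j ^ (3 ^ i)) * t ^ e i))"
          proof (intro sum.cong refl)
            fix i
            have "- (k j * Tr m ((B j * A j ^ (3 ^ i)) * t ^ e i))
                = - Tr m (k j * ((B j * A j ^ (3 ^ i)) * t ^ e i))" using TrSc[OF kc] by simp
            also have "\<dots> = Tr m (- (k j * ((B j * A j ^ (3 ^ i)) * t ^ e i)))" using TrM by simp
            also have "- (k j * ((B j * A j ^ (3 ^ i)) * t ^ e i)) = -(k j * B j * A j ^ (3 ^ i)) * t ^ e i"
              by (simp add: mult_ac)
            finally show "- (k j * Tr m ((B j * A j ^ (3 ^ i)) * t ^ e i))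
                = Tr m (-(k j * B j * A j ^ (3 ^ i)) * t ^ e i)" .
          qed
          finally show "k j * -(\<Sum>i<m. Tr m ((B j * A j ^ (3 ^ i)) * t ^ e i))
              = (\<Sum>i<m. Tr m (-(k j * B j * A j ^ (3 ^ i)) * t ^ e i))" .
        qed
        also have "\<dots> = (\<Sum>i<m. \<Sum>j<n. Tr m (-(k j * B j * A j ^ (3 ^ i)) * t ^ e i))"
          by (rule sum.swap)
        also have "\<dots> = (\<Sum>i<m. Tr m (c i * t ^ e i))"
          by (simp add: c_def sum_distrib_right TrS)
        finally show "f t = (\<Sum>i<m. Tr m (c i * t ^ e i))" .
      qed
      then show "f \<in> ?R" unfolding e_def by blast
    qed
  next
    show "?R \<subseteq> F3span ?G"
    proof
      fix f assume "f \<in> ?R"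
      then obtain c where f: "f = (\<lambda>t. \<Sum>j<m. Tr m (c j * t ^ e j))" unfolding e_def by blast
      define S where "S = (Fsub m - {0} :: 'a set)"
      define H where "H j = (\<lambda>t. \<Sum>a\<in>S. Tr m (a * t ^ (3 ^ m + 1)) * Tr m ((c j / a ^ (3 ^ j)) * t))" for j
      have Hj: "H j t = Tr m (c j * t ^ e j)" if "j < m" for j t
      proof -
        have "H j t = (\<Sum>a\<in>S. -(\<Sum>i<m. Tr m (((c j / a ^ (3 ^ j)) * a ^ (3 ^ i)) * t ^ e i)))"
          unfolding H_def e_def by (rule sum.cong[OF refl], rule gen) (simp add: S_def)
        also have "\<dots> = -(\<Sum>i<m. \<Sum>a\<in>S. Tr m (((c j / a ^ (3 ^ j)) * a ^ (3 ^ i)) * t ^ e i))"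
          by (simp add: sum_negf sum.swap[of _ S])
        also have "(\<Sum>i<m. \<Sum>a\<in>S. Tr m (((c j / a ^ (3 ^ j)) * a ^ (3 ^ i)) * t ^ e i))
            = (\<Sum>i<m. if i = j then Tr m (- c j * t ^ e j) else 0)"
        proof (intro sum.cong refl)
          fix i assume "i \<in> {..<m}"
          then have "(\<Sum>a\<in>S. a ^ (3 ^ i) / a ^ (3 ^ j)) = (if i = j then -1 else 0)"
            using ps that S_def by auto
          moreover have "(\<Sum>a\<in>S. Tr m (((c j / a ^ (3 ^ j)) * a ^ (3 ^ i)) * t ^ e i))
              = Tr m ((c j * (\<Sum>a\<in>S. a ^ (3 ^ i) / a ^ (3 ^ j))) * t ^ e i)"
            by (simp add: TrS sum_distrib_left sum_distrib_right mult_ac)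
          ultimately show "(\<Sum>a\<in>S. Tr m (((c j / a ^ (3 ^ j)) * a ^ (3 ^ i)) * t ^ e i))
            = (if i = j then Tr m (- c j * t ^ e j) else 0)" by (simp add: TrZ)
        qed
        also have "\<dots> = Tr m (- c j * t ^ e j)" using that by simp
        finally show ?thesis using TrM by simp
      qed
      have "f = (\<lambda>t. \<Sum>j<m. H j t)" unfolding f using Hj by simp
      moreover have "(\<lambda>t. \<Sum>j<m. H j t) \<in> F3span ?G"
      proof (rule span_sum)
        show "\<forall>j\<in>{..<m}. H j \<in> F3span ?G"
        proof
          fix j
          have inG: "(\<lambda>t. Tr m (a * t ^ (3 ^ m + 1)) * Tr m ((c j / a ^ (3 ^ j)) * t)) \<in> ?G"
            if "a \<in> S" for a
            using that unfolding S_def by blast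
          show "H j \<in> F3span ?G" unfolding H_def
            apply (rule span_sum)
             apply simp
            apply (intro ballI span_gen)
            apply (erule inG)
            done
        qed
      qed simp
      ultimately show "f \<in> F3span ?G" by simp
    qed
  qed
qed

end
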